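(* For all $n\ge 0$, the quadruples of statistics $(\operatorname{asc},\operatorname{des},\operatorname{MNA},\operatorname{MND})$ and $(\operatorname{des},\operatorname{asc},\operatorname{MND},\operatorname{MNA})$ are equidistributed on $S_n(231,312)$, i.e. $$\sum_{\pi\in S_n(231,312)} t_1^{\operatorname{asc}(\pi)}t_2^{\operatorname{des}(\pi)}t_3^{\operatorname{MNA}(\pi)}t_4^{\operatorname{MND}(\pi)}=\sum_{\pi\in S_n(231,312)} t_1^{\operatorname{des}(\pi)}t_2^{\operatorname{asc}(\pi)}t_3^{\operatorname{MND}(\pi)}t_4^{\operatorname{MNA}(\pi)}.$$
   Context: For $n\ge 0$, $S_n$ denotes the set of permutations $\pi=\pi_1\cdots\pi_n$ of $[n]=\{1,\dots,n\}$. $\pi$ avoids a pattern $\tau\in S_k$ if no subsequence $\pi_{i_1}\cdots\pi_{i_k}$ ($i_1<\dots<i_k$) satisfies $\pi_{i_a}<\pi_{i_b}\iff\tau_a<\tau_b$; $S_n(\tau,\rho)$ is the set of permutations in $S_n$ avoiding both $\tau$ and $\rho$. $\operatorname{asc}(\pi)$ (resp. $\operatorname{des}(\pi)$) is the number of $i\in[n-1]$ with $\pi_i<\pi_{i+1}$ (resp. $\pi_i>\pi_{i+1}$). $\operatorname{MNA}(\pi)$ is the maximum size of a set $I\subseteq[n-1]$ such that $\pi_i<\pi_{i+1}$ for all $i\in I$ and $|i-j|\ge 2$ for distinct $i,j\in I$; $\operatorname{MND}(\pi)$ is defined analogously with $\pi_i>\pi_{i+1}$. *)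

theory Defs
  imports "HOL-Combinatorics.Multiset_Permutations"
begin

text \<open>Permutations of [n] are represented as lists (one-line notation); list positions
are 0-based, so position i of the list corresponds to pi_(i+1).\<close>

definition Sn :: "nat \<Rightarrow> nat list set" where
  "Sn n = permutations_of_set {1..n}"

definition contains :: "nat list \<Rightarrow> nat list \<Rightarrow> bool" where
  "contains w tau \<longleftrightarrow> (\<exists>f::nat \<Rightarrow> nat.
      (\<forall>a b. a < b \<and> b < length tau \<longrightarrow> f a < f b) \<and>
      (\<forall>a < length tau. f a < length w) \<and>
      (\<forall>a < length tau. \<forall>b < length tau.
          (w ! f a < w ! f b \<longleftrightarrow> tau ! a < tau ! b)))"

definition avoids :: "nat list \<Rightarrow> nat list \<Rightarrow> bool" where
  "avoids w tau \<longleftrightarrow> \<not> contains w tau"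

definition Sn_av2 :: "nat \<Rightarrow> nat list \<Rightarrow> nat list \<Rightarrow> nat list set" where
  "Sn_av2 n tau rho = {w \<in> Sn n. avoids w tau \<and> avoids w rho}"

definition asc_set :: "nat list \<Rightarrow> nat set" where
  "asc_set w = {i. Suc i < length w \<and> w ! i < w ! Suc i}"

definition des_set :: "nat list \<Rightarrow> nat set" where
  "des_set w = {i. Suc i < length w \<and> w ! i > w ! Suc i}"

definition asc :: "nat list \<Rightarrow> nat" where
  "asc w = card (asc_set w)"

definition des :: "nat list \<Rightarrow> nat" where
  "des w = card (des_set w)"

definition max_nonadj :: "nat set \<Rightarrow> nat" where
  "max_nonadj S = Max {card I | I. I \<subseteq> S \<and> (\<forall>i\<in>I. \<forall>j\<in>I. i \<noteq> j \<longrightarrow> 2 \<le> (if i \<le> j then j - i else i - j))}"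

definition MNA :: "nat list \<Rightarrow> nat" where
  "MNA w = max_nonadj (asc_set w)"

definition MND :: "nat list \<Rightarrow> nat" where
  "MND w = max_nonadj (des_set w)"

end

theory Submission imports Defs begin

lemma c231:
  assumes "i<j" "j<k" "k<length w" "w!k < w!i" "w!i < w!j"
  shows "contains w [2,3,1]"
  unfolding contains_def
  apply (rule exI[of _ "\<lambda>a. if a=0 then i else if a=1 then j else k"])
  using assms by (auto simp: less_Suc_eq numeral_3_eq_3 nth_Cons')

lemma c312:
  assumes "i<j" "j<k" "k<length w" "w!j < w!k" "w!k < w!i"
  shows "contains w [3,1,2]"
  unfolding contains_def
  apply (rule exI[of _ "\<lambda>a. if a=0 then i else if a=1 then j else k"])
  using assms by (auto simp: less_Suc_eq numeral_3_eq_3 nth_Cons')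

definition R :: "nat set \<Rightarrow> nat \<Rightarrow> nat \<Rightarrow> bool" where
  "R A p q = (if p < q then (\<exists>j\<in>A. p \<le> j \<and> j < q)
              else if q < p then \<not>(\<exists>j\<in>A. q \<le> j \<and> j < p) else False)"

lemma R_irrefl: "\<not> R A p p" by (simp add: R_def)

lemma R_total: "p \<noteq> q \<Longrightarrow> R A p q \<or> R A q p"
  by (auto simp: R_def)

lemma R_trans: "R A p q \<Longrightarrow> R A q r \<Longrightarrow> R A p r"
  unfolding R_def
  apply (auto split: if_splits)
  apply (meson le_trans less_trans not_le)+
  done


lemma Sn_D: assumes "w \<in> Sn n" shows "set w = {1..n}" "distinct w" "length w = n"
proof -
  show s: "set w = {1..n}" "distinct w" using assms by (auto simp: Sn_def permutations_of_set_def)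
  then show "length w = n" using distinct_card by fastforce
qed

lemma av_D: assumes "w \<in> Sn_av2 n [2,3,1] [3,1,2]"
  shows "w \<in> Sn n" "\<not> contains w [2,3,1]" "\<not> contains w [3,1,2]"
  using assms by (auto simp: Sn_av2_def avoids_def)

lemma P1:
  assumes w: "w \<in> Sn_av2 n [2,3,1] [3,1,2]" and j: "j \<in> asc_set w"
    and pq: "p \<le> j" "j < q" "q < n"
  shows "w!p < w!q"
proof (rule ccontr)
  assume ne: "\<not> w!p < w!q"
  have d: "distinct w" and l: "length w = n" using Sn_D av_D(1)[OF w] by auto
  have a1: "\<not> contains w [2,3,1]" and a2: "\<not> contains w [3,1,2]" using av_D[OF w] by auto
  have jj: "Suc j < n" "w!j < w!Suc j" using j l by (auto simp: asc_set_def)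
  have neq: "\<And>a b. a < n \<Longrightarrow> b < n \<Longrightarrow> a \<noteq> b \<Longrightarrow> w!a \<noteq> w!b"
    using d l by (simp add: nth_eq_iff_index_eq)
  have lt: "w!q < w!p" using ne neq[of p q] pq by fastforce
  show False
  proof (cases "w!q < w!j")
    case True
    then have "q \<noteq> Suc j" using jj by auto
    then have "Suc j < q" using pq by auto
    then show False using c231[of j "Suc j" q w] True jj l pq a1 by auto
  next
    case False
    then have "w!q > w!j" using neq[of q j] pq jj by fastforce
    then have "p \<noteq> j" using lt by auto
    then have pj: "p < j" using pq by auto
    show False
    proof (cases "w!p > w!Suc j")
      case True
      then show False using c312[of p j "Suc j" w] pj jj l a2 by auto
    next
      case False
      then have "w!p < w!Suc j" using neq[of p "Suc j"] pj jj by fastforce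
      then have "q \<noteq> Suc j" using lt by auto
      then have "Suc j < q" using pq by auto
      then show False using c231[of p "Suc j" q w] pj jj l pq a1 lt \<open>w!p < w!Suc j\<close> by auto
    qed
  qed
qed

lemma decr:
  fixes w :: "nat list"
  assumes "\<forall>j. p \<le> j \<and> j < q \<longrightarrow> w!Suc j < w!j" "p < q"
  shows "w!q < w!p"
  using assms
proof (induction q)
  case 0 then show ?case by simp
next
  case (Suc q)
  show ?case
  proof (cases "p = q")
    case True then show ?thesis using Suc.prems by auto
  next
    case False
    then have "w!q < w!p" using Suc by auto
    moreover have "w!Suc q < w!q" using Suc.prems by auto
    ultimately show ?thesis by simp
  qed
qed

lemma ord_lt:
  assumes w: "w \<in> Sn_av2 n [2,3,1] [3,1,2]" and pq: "p < q" "q < n"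
  shows "w!p < w!q \<longleftrightarrow> R (asc_set w) p q"
proof -
  have d: "distinct w" and l: "length w = n" using Sn_D av_D(1)[OF w] by auto
  have neq: "\<And>a b. a < n \<Longrightarrow> b < n \<Longrightarrow> a \<noteq> b \<Longrightarrow> w!a \<noteq> w!b"
    using d l by (simp add: nth_eq_iff_index_eq)
  show ?thesis
  proof (cases "\<exists>j\<in>asc_set w. p \<le> j \<and> j < q")
    case True
    then obtain j where "j \<in> asc_set w" "p \<le> j" "j < q" by auto
    then show ?thesis using P1[OF w] pq True by (auto simp: R_def)
  next
    case False
    have "\<forall>j. p \<le> j \<and> j < q \<longrightarrow> w!Suc j < w!j"
    proof (intro allI impI)
      fix j assume "p \<le> j \<and> j < q"
      then have "j \<notin> asc_set w" "Suc j < n" "w!Suc j \<noteq> w!j" using False pq neq[of "Suc j" j] by auto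
      then show "w!Suc j < w!j" using l by (auto simp: asc_set_def)
    qed
    then have "w!q < w!p" using decr pq by blast
    then show ?thesis using False pq by (auto simp: R_def)
  qed
qed

lemma ord_all:
  assumes w: "w \<in> Sn_av2 n [2,3,1] [3,1,2]" and pq: "p < n" "q < n"
  shows "w!p < w!q \<longleftrightarrow> R (asc_set w) p q"
proof -
  have d: "distinct w" and l: "length w = n" using Sn_D av_D(1)[OF w] by auto
  have neq: "\<And>a b. a < n \<Longrightarrow> b < n \<Longrightarrow> a \<noteq> b \<Longrightarrow> w!a \<noteq> w!b"
    using d l by (simp add: nth_eq_iff_index_eq)
  consider "p < q" | "p = q" | "q < p" by arith
  then show ?thesis
  proof cases
    case 1 then show ?thesis using ord_lt[OF w] pq by auto
  next
    case 2 then show ?thesis by (simp add: R_def)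
  next
    case 3
    have "w!q < w!p \<longleftrightarrow> R (asc_set w) q p" using ord_lt[OF w 3 pq(1)] .
    moreover have "w!p \<noteq> w!q" using neq 3 pq by auto
    moreover have "R (asc_set w) p q \<longleftrightarrow> \<not> R (asc_set w) q p"
      using 3 by (auto simp: R_def)
    ultimately show ?thesis by auto
  qed
qed

lemma rank:
  assumes "w \<in> Sn n" "i < n"
  shows "w!i = card {p. p < n \<and> w!p \<le> w!i}"
proof -
  have s: "set w = {1..n}" and d: "distinct w" and l: "length w = n" using Sn_D assms by auto
  have "(\<lambda>p. w!p) ` {p. p < n \<and> w!p \<le> w!i} = {1..w!i}"
  proof
    show "(\<lambda>p. w!p) ` {p. p < n \<and> w!p \<le> w!i} \<subseteq> {1..w!i}"
      using s l by (auto simp: set_conv_nth)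
  next
    show "{1..w!i} \<subseteq> (\<lambda>p. w!p) ` {p. p < n \<and> w!p \<le> w!i}"
    proof
      fix x assume x: "x \<in> {1..w!i}"
      have "w!i \<in> {1..n}" using s l assms(2) nth_mem by blast
      then have "x \<in> set w" using x s by auto
      then obtain p where "p < n" "w!p = x" using l by (auto simp: in_set_conv_nth)
      then show "x \<in> (\<lambda>p. w!p) ` {p. p < n \<and> w!p \<le> w!i}" using x by force
    qed
  qed
  moreover have "inj_on (\<lambda>p. w!p) {p. p < n \<and> w!p \<le> w!i}"
    using d l by (auto simp: inj_on_def nth_eq_iff_index_eq)
  ultimately show ?thesis using card_image by fastforce
qed


lemma inj_asc:
  assumes u: "u \<in> Sn_av2 n [2,3,1] [3,1,2]" and v: "v \<in> Sn_av2 n [2,3,1] [3,1,2]"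
    and e: "asc_set u = asc_set v"
  shows "u = v"
proof -
  have key: "w!i = card {p. p < n \<and> (p = i \<or> R (asc_set w) p i)}"
    if w: "w \<in> Sn_av2 n [2,3,1] [3,1,2]" and i: "i < n" for w i
  proof -
    have d: "distinct w" and l: "length w = n" using Sn_D av_D(1)[OF w] by auto
    have "{p. p < n \<and> w!p \<le> w!i} = {p. p < n \<and> (p = i \<or> R (asc_set w) p i)}"
    proof (intro Collect_cong conj_cong refl)
      fix p assume p: "p < n"
      have "w!p \<le> w!i \<longleftrightarrow> p = i \<or> w!p < w!i"
        using d l p i by (auto simp: nth_eq_iff_index_eq)
      then show "w!p \<le> w!i \<longleftrightarrow> p = i \<or> R (asc_set w) p i" using ord_all[OF w p i] by simp
    qed
    then show ?thesis using rank[OF av_D(1)[OF w] i] by simp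
  qed
  show ?thesis
    apply (rule nth_equalityI)
    using Sn_D(3)[OF av_D(1)[OF u]] Sn_D(3)[OF av_D(1)[OF v]] key[OF u] key[OF v] e by auto
qed

definition rk :: "nat \<Rightarrow> nat set \<Rightarrow> nat \<Rightarrow> nat" where
  "rk n A i = card {p. p < n \<and> (p = i \<or> R A p i)}"

definition L :: "nat \<Rightarrow> nat set \<Rightarrow> nat list" where
  "L n A = map (rk n A) [0..<n]"

lemma rk_less: assumes "p < n" "q < n" "R A p q" shows "rk n A p < rk n A q"
  unfolding rk_def
proof (rule psubset_card_mono)
  show "finite {pa. pa < n \<and> (pa = q \<or> R A pa q)}" by simp
  show "{pa. pa < n \<and> (pa = p \<or> R A pa p)} \<subset> {pa. pa < n \<and> (pa = q \<or> R A pa q)}"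
  proof
    show "{pa. pa < n \<and> (pa = p \<or> R A pa p)} \<subseteq> {pa. pa < n \<and> (pa = q \<or> R A pa q)}"
      using assms(3) R_trans[of A _ p q] by auto
    have "\<not> R A q p" using assms(3) R_trans[of A q p q] R_irrefl[of A q] by auto
    moreover have "q \<noteq> p" using assms(3) R_irrefl[of A p] by auto
    ultimately show "{pa. pa < n \<and> (pa = p \<or> R A pa p)} \<noteq> {pa. pa < n \<and> (pa = q \<or> R A pa q)}"
      using assms(2) by blast
  qed
qed

lemma rk_iff: assumes "p < n" "q < n" shows "rk n A p < rk n A q \<longleftrightarrow> R A p q"
proof
  assume h: "rk n A p < rk n A q"
  show "R A p q"
  proof (rule ccontr)
    assume "\<not> R A p q"
    moreover have "p \<noteq> q" using h by auto
    ultimately have "R A q p" using R_total by blast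
    then show False using rk_less[OF assms(2,1), of A] h by simp
  qed
qed (rule rk_less[OF assms])

lemma rk_range: assumes "i < n" shows "rk n A i \<in> {1..n}"
proof -
  have "{p. p < n \<and> (p = i \<or> R A p i)} \<subseteq> {..<n}" by auto
  then have "rk n A i \<le> n" unfolding rk_def by (metis card_lessThan card_mono finite_lessThan)
  moreover have "rk n A i > 0" unfolding rk_def using assms by (subst card_gt_0_iff) auto
  ultimately show ?thesis by auto
qed

lemma con231_D: assumes "contains w [2,3,1]"
  shows "\<exists>i j k. i<j \<and> j<k \<and> k<length w \<and> w!k < w!i \<and> w!i < w!j"
proof -
  obtain f where f: "\<forall>a b. a < b \<and> b < length [2::nat,3,1] \<longrightarrow> f a < f b"
      "\<forall>a < length [2::nat,3,1]. f a < length w"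
      "\<forall>a < length [2::nat,3,1]. \<forall>b < length [2::nat,3,1]. (w ! f a < w ! f b \<longleftrightarrow> [2::nat,3,1] ! a < [2::nat,3,1] ! b)"
    using assms unfolding contains_def by blast
  have "f 0 < f 1" "f 1 < f 2" "f 2 < length w" "w!f 2 < w!f 0" "w!f 0 < w!f 1"
    using f(1)[rule_format, of 0 1] f(1)[rule_format, of 1 2] f(2)[rule_format, of 2]
      f(3)[rule_format, of 2 0] f(3)[rule_format, of 0 1] by auto
  then show ?thesis by blast
qed

lemma con312_D: assumes "contains w [3,1,2]"
  shows "\<exists>i j k. i<j \<and> j<k \<and> k<length w \<and> w!j < w!k \<and> w!k < w!i"
proof -
  obtain f where f: "\<forall>a b. a < b \<and> b < length [3::nat,1,2] \<longrightarrow> f a < f b"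
      "\<forall>a < length [3::nat,1,2]. f a < length w"
      "\<forall>a < length [3::nat,1,2]. \<forall>b < length [3::nat,1,2]. (w ! f a < w ! f b \<longleftrightarrow> [3::nat,1,2] ! a < [3::nat,1,2] ! b)"
    using assms unfolding contains_def by blast
  have "f 0 < f 1" "f 1 < f 2" "f 2 < length w" "w!f 1 < w!f 2" "w!f 2 < w!f 0"
    using f(1)[rule_format, of 0 1] f(1)[rule_format, of 1 2] f(2)[rule_format, of 2]
      f(3)[rule_format, of 1 2] f(3)[rule_format, of 2 0] by auto
  then show ?thesis by blast
qed

lemma L_in: "L n A \<in> Sn_av2 n [2,3,1] [3,1,2]"
proof -
  have len: "length (L n A) = n" by (simp add: L_def)
  have nth: "\<And>i. i < n \<Longrightarrow> L n A ! i = rk n A i" by (simp add: L_def)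
  have dist: "distinct (L n A)"
    unfolding L_def distinct_map
  proof
    show "inj_on (rk n A) (set [0..<n])"
      unfolding inj_on_def using rk_iff R_total by (metis atLeastLessThan_iff less_irrefl set_upt)
  qed simp
  have sub: "set (L n A) \<subseteq> {1..n}" using rk_range by (auto simp: L_def)
  have "card (set (L n A)) = n" using dist len by (simp add: distinct_card)
  then have "set (L n A) = {1..n}" using sub by (simp add: card_subset_eq)
  then have S: "L n A \<in> Sn n" using dist by (simp add: Sn_def permutations_of_set_def)
  have a1: "\<not> contains (L n A) [2,3,1]"
  proof
    assume "contains (L n A) [2,3,1]"
    then obtain i j k where "i<j" "j<k" "k<n" "L n A!k < L n A!i" "L n A!i < L n A!j"
      using con231_D[of "L n A"] unfolding len by blast
    then have "R A k i" "R A i j" "i < j" "j < k" using nth rk_iff by auto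
    then show False unfolding R_def by (auto split: if_splits)
  qed
  have a2: "\<not> contains (L n A) [3,1,2]"
  proof
    assume "contains (L n A) [3,1,2]"
    then obtain i j k where "i<j" "j<k" "k<n" "L n A!j < L n A!k" "L n A!k < L n A!i"
      using con312_D[of "L n A"] unfolding len by blast
    then have "R A j k" "R A k i" "i < j" "j < k" using nth rk_iff by auto
    then show False unfolding R_def by (auto split: if_splits)
  qed
  show ?thesis unfolding Sn_av2_def avoids_def using S a1 a2 by blast
qed

lemma asc_L: assumes "A \<subseteq> {0..<n-1}" shows "asc_set (L n A) = A"
proof -
  have "i \<in> asc_set (L n A) \<longleftrightarrow> i \<in> A" for i
  proof -
    have "i \<in> asc_set (L n A) \<longleftrightarrow> Suc i < n \<and> R A i (Suc i)"
      by (auto simp: asc_set_def L_def rk_iff simp del: upt_Suc)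
    also have "\<dots> \<longleftrightarrow> Suc i < n \<and> (\<exists>j\<in>A. i \<le> j \<and> j < Suc i)" by (simp add: R_def)
    also have "\<dots> \<longleftrightarrow> Suc i < n \<and> i \<in> A"
    proof -
      have e: "\<And>j. (i \<le> j \<and> j < Suc i) = (j = i)" by arith
      show ?thesis unfolding e by blast
    qed
    also have "\<dots> \<longleftrightarrow> i \<in> A" using assms by fastforce
    finally show ?thesis .
  qed
  then show ?thesis by auto
qed


lemma asc_sub: "length w = n \<Longrightarrow> asc_set w \<subseteq> {0..<n-1}"
  by (auto simp: asc_set_def)

lemma des_eq: assumes "w \<in> Sn n" shows "des_set w = {0..<n-1} - asc_set w"
proof -
  have d: "distinct w" and l: "length w = n" using Sn_D assms by auto
  have "w!i \<noteq> w!Suc i" if "Suc i < n" for i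
    using d l that by (simp add: nth_eq_iff_index_eq)
  then show ?thesis using l unfolding des_set_def asc_set_def
    by (auto simp: less_diff_conv) (meson linorder_neqE_nat)
qed

lemma bij_asc: "bij_betw asc_set (Sn_av2 n [2,3,1] [3,1,2]) (Pow {0..<n-1})"
proof (rule bij_betw_imageI)
  show "inj_on asc_set (Sn_av2 n [2,3,1] [3,1,2])" using inj_asc by (meson inj_onI)
  show "asc_set ` Sn_av2 n [2,3,1] [3,1,2] = Pow {0..<n-1}"
  proof
    show "asc_set ` Sn_av2 n [2,3,1] [3,1,2] \<subseteq> Pow {0..<n-1}"
      using asc_sub Sn_D(3) av_D(1) by blast
    show "Pow {0..<n-1} \<subseteq> asc_set ` Sn_av2 n [2,3,1] [3,1,2]"
    proof
      fix A assume "A \<in> Pow {0..<n-1}"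
      then have "asc_set (L n A) = A" using asc_L by auto
      then show "A \<in> asc_set ` Sn_av2 n [2,3,1] [3,1,2]" using L_in by (metis image_eqI)
    qed
  qed
qed

theorem theorem12:
  fixes t1 t2 t3 t4 :: "'a :: comm_semiring_1" and n :: nat
  shows "(\<Sum>w\<in>Sn_av2 n [2,3,1] [3,1,2].
            t1 ^ asc w * t2 ^ des w * t3 ^ MNA w * t4 ^ MND w)
       = (\<Sum>w\<in>Sn_av2 n [2,3,1] [3,1,2].
            t1 ^ des w * t2 ^ asc w * t3 ^ MND w * t4 ^ MNA w)"
proof -
  define S where "S = Sn_av2 n [2,3,1] [3,1,2]"
  define U where "U = {0..<n-1}"
  define g where "g A = t1 ^ card A * t2 ^ card (U - A) * t3 ^ max_nonadj A * t4 ^ max_nonadj (U - A)" for A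
  have b: "bij_betw asc_set S (Pow U)" using bij_asc unfolding S_def U_def .
  have dw: "des_set w = U - asc_set w" and su: "asc_set w \<subseteq> U" if "w \<in> S" for w
    using des_eq[OF av_D(1)] asc_sub[OF Sn_D(3)[OF av_D(1)]] that unfolding S_def U_def by auto
  have L: "(\<Sum>w\<in>S. t1 ^ asc w * t2 ^ des w * t3 ^ MNA w * t4 ^ MND w) = (\<Sum>w\<in>S. g (asc_set w))"
    by (rule sum.cong) (auto simp: g_def asc_def des_def MNA_def MND_def dw)
  have R: "(\<Sum>w\<in>S. t1 ^ des w * t2 ^ asc w * t3 ^ MND w * t4 ^ MNA w) = (\<Sum>w\<in>S. g (U - asc_set w))"
  proof (rule sum.cong)
    fix w assume w: "w \<in> S"
    have "U - (U - asc_set w) = asc_set w" using su[OF w] by auto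
    then show "t1 ^ des w * t2 ^ asc w * t3 ^ MND w * t4 ^ MNA w = g (U - asc_set w)"
      by (simp add: g_def asc_def des_def MNA_def MND_def dw[OF w])
  qed simp
  have 1: "(\<Sum>w\<in>S. g (asc_set w)) = (\<Sum>A\<in>Pow U. g A)" using sum.reindex_bij_betw[OF b] .
  have 2: "(\<Sum>w\<in>S. g (U - asc_set w)) = (\<Sum>A\<in>Pow U. g (U - A))"
    using sum.reindex_bij_betw[OF b, of "\<lambda>A. g (U - A)"] .
  have bc: "bij_betw (\<lambda>A. U - A) (Pow U) (Pow U)"
    by (rule bij_betw_byWitness[where f'="\<lambda>A. U - A"]) auto
  have 3: "(\<Sum>A\<in>Pow U. g (U - A)) = (\<Sum>A\<in>Pow U. g A)" using sum.reindex_bij_betw[OF bc] .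
  show ?thesis using L R 1 2 3 unfolding S_def by simp
qed

end
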